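(* Let $K$ be a compact Hausdorff space, $B$ the open unit ball of $C(K)$, $f_0\in B$, and $T(f)=\frac{f-f_0}{1-\overline{f_0}f}$ for $f\in B$. Let $H(B)$ denote either $A_u(B)$ or $H^\infty(B)$. Then $\psi\circ T\in H(B)$ for every $\psi\in H(B)$, so $\hat T:M_{H(B)}\to M_{H(B)}$, $\hat T(\tau)(\psi)=\tau(\psi\circ T)$, is well defined, and $\hat T$ maps $\mathcal M_{f_0}(B)$ onto $\mathcal M_0(B)$.
   Context: $A_u(B)$ is the uniform algebra of bounded holomorphic functions on $B$ that are uniformly continuous on $B$; $H^\infty(B)$ is the uniform algebra of all bounded holomorphic functions on $B$. $M_{H(B)}$ is the spectrum (nonzero multiplicative linear functionals) of $H(B)$. For $g_0\in B$, $\mathcal M_{g_0}(B)=\{\tau\in M_{H(B)}:\ \tau(g)=g(g_0)\ \text{for all } g\in A_u(B)\}$. *)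

theory Defs
  imports "HOL-Analysis.Analysis"
begin

text \<open>C(K) is rendered as the Banach space of (bounded) continuous complex functions
  on the type 'a (for compact 'a every continuous function is bounded) with the sup norm.\<close>

type_synonym 'a CK = "'a \<Rightarrow>\<^sub>C complex"

text \<open>Complex scalar multiplication on C(K) (pointwise); the library only provides real scaling.\<close>
definition scaleC_CK :: "complex \<Rightarrow> 'a::topological_space CK \<Rightarrow> 'a CK" where
  "scaleC_CK c f = Bcontfun (\<lambda>x. c * apply_bcontfun f x)"

definition unitB :: "'a::topological_space CK set" where
  "unitB = ball 0 1"

definition holo_on :: "'a::topological_space CK set \<Rightarrow> ('a CK \<Rightarrow> complex) \<Rightarrow> bool" where
  "holo_on S \<psi> \<longleftrightarrow> (\<forall>g\<in>S. \<exists>L. (\<psi> has_derivative L) (at g) \<and>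
      (\<forall>c v. L (scaleC_CK c v) = c * L v))"

text \<open>Functions are considered as elements of the algebras only through their values on B;
  to make this extensional we require them to vanish outside B.\<close>
definition Hinf :: "'a::topological_space CK set \<Rightarrow> ('a CK \<Rightarrow> complex) set" where
  "Hinf S = {\<psi>. holo_on S \<psi> \<and> (\<exists>M. \<forall>g\<in>S. norm (\<psi> g) \<le> M) \<and> (\<forall>g. g \<notin> S \<longrightarrow> \<psi> g = 0)}"

definition Au :: "'a::topological_space CK set \<Rightarrow> ('a CK \<Rightarrow> complex) set" where
  "Au S = {\<psi>. \<psi> \<in> Hinf S \<and> uniformly_continuous_on S \<psi>}"

text \<open>Spectrum of a function algebra A: nonzero multiplicative complex-linear functionals on A
  (extended by 0 outside A, so that functionals are identified with their restriction to A).\<close>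
definition spectrum_alg :: "('b \<Rightarrow> complex) set \<Rightarrow> (('b \<Rightarrow> complex) \<Rightarrow> complex) set" where
  "spectrum_alg A = {\<tau>.
      (\<forall>\<psi>\<in>A. \<forall>\<phi>\<in>A. \<tau> (\<lambda>x. \<psi> x + \<phi> x) = \<tau> \<psi> + \<tau> \<phi>) \<and>
      (\<forall>\<psi>\<in>A. \<forall>c. \<tau> (\<lambda>x. c * \<psi> x) = c * \<tau> \<psi>) \<and>
      (\<forall>\<psi>\<in>A. \<forall>\<phi>\<in>A. \<tau> (\<lambda>x. \<psi> x * \<phi> x) = \<tau> \<psi> * \<tau> \<phi>) \<and>
      (\<exists>\<psi>\<in>A. \<tau> \<psi> \<noteq> 0) \<and>
      (\<forall>\<psi>. \<psi> \<notin> A \<longrightarrow> \<tau> \<psi> = 0)}"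

definition fiber :: "('a::topological_space CK \<Rightarrow> complex) set \<Rightarrow> 'a CK \<Rightarrow> (('a CK \<Rightarrow> complex) \<Rightarrow> complex) set" where
  "fiber H g0 = {\<tau> \<in> spectrum_alg H. \<forall>g\<in>Au unitB. \<tau> g = g g0}"

definition Tmap :: "'a::topological_space CK \<Rightarrow> 'a CK \<Rightarrow> 'a CK" where
  "Tmap f0 f = Bcontfun (\<lambda>x. (apply_bcontfun f x - apply_bcontfun f0 x) /
                                  (1 - cnj (apply_bcontfun f0 x) * apply_bcontfun f x))"

definition compT :: "'a::topological_space CK \<Rightarrow> ('a CK \<Rightarrow> complex) \<Rightarrow> ('a CK \<Rightarrow> complex)" where
  "compT f0 \<psi> = (\<lambda>g. if g \<in> unitB then \<psi> (Tmap f0 g) else 0)"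

definition hatT :: "('a::topological_space CK \<Rightarrow> complex) set \<Rightarrow> 'a CK \<Rightarrow>
    (('a CK \<Rightarrow> complex) \<Rightarrow> complex) \<Rightarrow> (('a CK \<Rightarrow> complex) \<Rightarrow> complex)" where
  "hatT H f0 \<tau> = (\<lambda>\<psi>. if \<psi> \<in> H then \<tau> (compT f0 \<psi>) else 0)"

end

theory Submission
  imports Defs
begin
definition mob :: "complex \<Rightarrow> complex \<Rightarrow> complex" where
  "mob w z = (z - w) / (1 - cnj w * z)"

lemma denom_ge:
  assumes "norm w < 1" "norm z \<le> 1"
  shows "1 - norm w \<le> norm (1 - cnj w * z)"
proof -
  have "norm (cnj w * z) \<le> norm w"
    using assms by (simp add: norm_mult mult_left_le)
  moreover have "1 - norm (cnj w * z) \<le> norm (1 - cnj w * z)"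
    using norm_triangle_ineq2[of 1 "cnj w * z"] by simp
  ultimately show ?thesis by linarith
qed

lemma denom_nz:
  assumes "norm w < 1" "norm z \<le> 1"
  shows "1 - cnj w * z \<noteq> 0"
  using denom_ge[OF assms] assms(1) by auto

lemma mob_diff:
  assumes "1 - cnj w * z1 \<noteq> 0" "1 - cnj w * z2 \<noteq> 0"
  shows "mob w z1 - mob w z2 = (z1 - z2) * (1 - w * cnj w) / ((1 - cnj w * z1) * (1 - cnj w * z2))"
  using assms unfolding mob_def by (simp add: field_simps)

lemma mob_inv:
  assumes "norm w < 1" "1 - cnj w * z \<noteq> 0"
  shows "mob (-w) (mob w z) = z"
proof -
  have "w * cnj w \<noteq> 1"
  proof
    assume "w * cnj w = 1"
    then have "norm (w * cnj w) = 1" by simp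
    then have "norm w * norm w = 1" by (simp add: norm_mult)
    moreover have "norm w * norm w \<le> norm w"
      using assms(1) by (simp add: mult_left_le)
    ultimately show False using assms(1) by linarith
  qed
  then have h: "1 - w * cnj w \<noteq> 0" by simp
  define D where "D = 1 - cnj w * z"
  have D: "D \<noteq> 0" using assms(2) D_def by simp
  have e1: "mob w z + w = z * (1 - w * cnj w) / D"
    using D unfolding mob_def D_def by (simp add: field_simps)
  have e2: "1 + cnj w * mob w z = (1 - w * cnj w) / D"
    using D unfolding mob_def D_def by (simp add: field_simps)
  have "mob (-w) (mob w z) = (mob w z + w) / (1 + cnj w * mob w z)"
    by (simp add: mob_def)
  also have "\<dots> = (z * (1 - w * cnj w) / D) / ((1 - w * cnj w) / D)"
    by (simp only: e1 e2)
  also have "\<dots> = z * (1 - w * cnj w) / (1 - w * cnj w)"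
    using D by simp
  also have "\<dots> = z" using h by simp
  finally show ?thesis .
qed

lemma mob_self: "mob w w = 0" by (simp add: mob_def)
lemma mob_zero: "mob (-w) 0 = w" by (simp add: mob_def)

lemma mob_sq:
  assumes "1 - cnj w * z \<noteq> 0"
  shows "(norm (mob w z))^2 = 1 - (1 - (norm w)^2) * (1 - (norm z)^2) / (norm (1 - cnj w * z))^2"
proof -
  have id: "(z - w) * cnj (z - w) + (1 - w * cnj w) * (1 - z * cnj z) = (1 - cnj w * z) * cnj (1 - cnj w * z)"
    by (simp add: algebra_simps)
  have "(norm (z - w))^2 + (1 - (norm w)^2) * (1 - (norm z)^2) = (norm (1 - cnj w * z))^2"
  proof -
    have "complex_of_real ((norm (z - w))^2 + (1 - (norm w)^2) * (1 - (norm z)^2)) =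
      complex_of_real ((norm (1 - cnj w * z))^2)"
      using id by (simp only: of_real_add of_real_mult of_real_diff of_real_1 complex_norm_square)
    then show ?thesis using of_real_eq_iff by blast
  qed
  then show ?thesis using assms
    by (simp add: mob_def norm_divide power_divide field_simps)
qed

lemma mob_bound:
  assumes "norm w \<le> a" "a < 1" "norm z \<le> b" "b < 1"
  shows "(norm (mob w z))^2 \<le> 1 - (1 - a^2) * (1 - b^2) / 4"
proof -
  have nz: "1 - cnj w * z \<noteq> 0" using denom_nz[of w z] assms by auto
  have "norm (1 - cnj w * z) \<le> 2"
  proof -
    have "norm (1 - cnj w * z) \<le> 1 + norm (cnj w * z)" using norm_triangle_ineq4[of 1 "cnj w * z"] by simp
    also have "norm (cnj w * z) \<le> 1" using assms
      by (simp add: norm_mult) (meson mult_le_one norm_ge_zero order.trans less_imp_le)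
    finally show ?thesis by simp
  qed
  then have d: "(norm (1 - cnj w * z))^2 \<le> 4"
    by (metis norm_ge_zero power_mono power2_eq_square numeral_Bit0 mult_2 order_refl one_add_one num_double numeral_times_numeral)
  have d0: "(norm (1 - cnj w * z))^2 > 0" using nz by simp
  have a1: "(1 - a^2) * (1 - b^2) \<le> (1 - (norm w)^2) * (1 - (norm z)^2)"
  proof (rule mult_mono)
    show "1 - a^2 \<le> 1 - (norm w)^2" using assms power_mono[of "norm w" a 2] by simp
    show "1 - b^2 \<le> 1 - (norm z)^2" using assms power_mono[of "norm z" b 2] by simp
    show "0 \<le> 1 - (norm w)^2" using assms power_mono[of "norm w" 1 2] by simp
    show "0 \<le> 1 - b^2" using assms power_mono[of b 1 2] norm_ge_zero[of z] by simp
  qed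
  have a2: "0 \<le> (1 - a^2) * (1 - b^2)"
    using assms power_mono[of b 1 2] power_mono[of a 1 2] norm_ge_zero[of z] norm_ge_zero[of w] by simp
  have "(1 - a^2) * (1 - b^2) / 4 \<le> (1 - (norm w)^2) * (1 - (norm z)^2) / (norm (1 - cnj w * z))^2"
  proof -
    let ?P = "(1 - a^2) * (1 - b^2)" and ?X = "(1 - (norm w)^2) * (1 - (norm z)^2)"
      and ?Y = "(norm (1 - cnj w * z))^2"
    have "?P / 4 \<le> ?X / 4" using a1 by simp
    also have "?X / 4 \<le> ?X / ?Y"
      using a1 a2 d d0 by (intro divide_left_mono) auto
    finally show ?thesis .
  qed
  then show ?thesis using mob_sq[OF nz] by simp
qed

lemma unitB_iff: "f \<in> unitB \<longleftrightarrow> norm f < 1"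
  by (simp add: unitB_def dist_norm)

lemma open_unitB: "open unitB" by (simp add: unitB_def)

lemma Tmap_apply:
  fixes f0 f :: "'a::topological_space CK"
  assumes "norm f0 < 1" "norm f \<le> 1"
  shows "apply_bcontfun (Tmap f0 f) x = mob (apply_bcontfun f0 x) (apply_bcontfun f x)"
proof -
  let ?u = "\<lambda>x. (apply_bcontfun f x - apply_bcontfun f0 x) / (1 - cnj (apply_bcontfun f0 x) * apply_bcontfun f x)"
  have w: "norm (apply_bcontfun f0 y) < 1" for y using norm_bounded[of f0 y] assms by linarith
  have z: "norm (apply_bcontfun f y) \<le> 1" for y using norm_bounded[of f y] assms by linarith
  have nz: "1 - cnj (apply_bcontfun f0 y) * apply_bcontfun f y \<noteq> 0" for y
    using denom_nz[OF w z] .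
  have ge: "1 - norm f0 \<le> norm (1 - cnj (apply_bcontfun f0 y) * apply_bcontfun f y)" for y
    using denom_ge[OF w z, of y y] norm_bounded[of f0 y] by linarith
  have cont: "continuous_on UNIV ?u"
    using nz by (intro continuous_intros) auto
  have bnd: "norm (?u y) \<le> 2 / (1 - norm f0)" for y
  proof -
    have "norm (apply_bcontfun f y - apply_bcontfun f0 y) \<le> 2"
      using norm_triangle_ineq4[of "apply_bcontfun f y" "apply_bcontfun f0 y"] w[of y] z[of y] by linarith
    then show ?thesis
      using ge[of y] assms(1) by (simp add: norm_divide frac_le)
  qed
  have "?u \<in> bcontfun" using bcontfun_normI[OF cont bnd] .
  then show ?thesis by (simp add: Tmap_def Bcontfun_inverse mob_def)
qed

lemma Tmap_norm:
  fixes f0 f :: "'a::topological_space CK"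
  assumes "norm f0 < 1" "norm f < 1"
  shows "norm (Tmap f0 f) < 1"
proof -
  define c where "c = (1 - (norm f0)^2) * (1 - (norm f)^2) / 4"
  have a2: "(norm f0)^2 < 1" using assms power_strict_mono[of "norm f0" 1 2] by simp
  have b2: "(norm f)^2 < 1" using assms power_strict_mono[of "norm f" 1 2] by simp
  have c0: "0 < c" using a2 b2 by (simp add: c_def)
  have "norm (apply_bcontfun (Tmap f0 f) x) \<le> sqrt (1 - c)" for x
  proof -
    have "(norm (apply_bcontfun (Tmap f0 f) x))^2 \<le> 1 - c"
      unfolding Tmap_apply[OF assms(1) less_imp_le[OF assms(2)]] c_def
      by (rule mob_bound) (auto simp: norm_bounded assms)
    then show ?thesis by (simp add: real_le_rsqrt)
  qed
  then have "norm (Tmap f0 f) \<le> sqrt (1 - c)" by (rule norm_bound)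
  also have "sqrt (1 - c) < 1" using c0 by simp
  finally show ?thesis .
qed

lemma Tmap_unitB: "f0 \<in> unitB \<Longrightarrow> f \<in> unitB \<Longrightarrow> Tmap f0 f \<in> unitB"
  by (simp add: unitB_iff Tmap_norm)

lemma Tmap_self: "norm f0 < 1 \<Longrightarrow> Tmap f0 f0 = 0"
  by (rule bcontfun_eqI) (simp add: Tmap_apply mob_self)

lemma Tmap_zero: "norm f0 < 1 \<Longrightarrow> Tmap (-f0) 0 = f0"
  by (rule bcontfun_eqI) (simp add: Tmap_apply mob_zero)

lemma Tmap_inv:
  fixes f0 g :: "'a::topological_space CK"
  assumes "norm f0 < 1" "norm g < 1"
  shows "Tmap f0 (Tmap (-f0) g) = g"
proof (rule bcontfun_eqI)
  fix x
  have n: "norm (- f0) < 1" using assms by simp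
  have t: "norm (Tmap (-f0) g) \<le> 1" using Tmap_norm[OF n assms(2)] by simp
  have w: "norm (- apply_bcontfun f0 x) < 1" using norm_bounded[of f0 x] assms by simp
  have z: "norm (apply_bcontfun g x) \<le> 1" using norm_bounded[of g x] assms by simp
  have "apply_bcontfun (Tmap f0 (Tmap (-f0) g)) x
      = mob (-(- apply_bcontfun f0 x)) (mob (- apply_bcontfun f0 x) (apply_bcontfun g x))"
    using Tmap_apply[OF assms(1) t] Tmap_apply[OF n less_imp_le[OF assms(2)]] by simp
  also have "\<dots> = apply_bcontfun g x"
    by (rule mob_inv[OF w denom_nz[OF w z]])
  finally show "apply_bcontfun (Tmap f0 (Tmap (-f0) g)) x = apply_bcontfun g x" .
qed

lemma K_le: "norm (w::complex) < 1 \<Longrightarrow> norm (1 - w * cnj w) \<le> 1"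
proof -
  assume a: "norm w < 1"
  have e: "w * cnj w = complex_of_real ((norm w)^2)" by (rule complex_norm_square[symmetric])
  have "1 - w * cnj w = complex_of_real (1 - (norm w)^2)"
    by (simp only: e of_real_diff of_real_1)
  moreover have "(norm w)^2 \<le> 1" using a power_mono[of "norm w" 1 2] by simp
  ultimately show ?thesis by (simp del: of_real_diff)
qed

lemma Tmap_lip:
  fixes f0 f g :: "'a::topological_space CK"
  assumes "norm f0 < 1" "norm f \<le> 1" "norm g \<le> 1"
  shows "norm (Tmap f0 f - Tmap f0 g) \<le> norm (f - g) / (1 - norm f0)^2"
proof (rule norm_bound)
  fix x
  let ?w = "apply_bcontfun f0 x" and ?z1 = "apply_bcontfun f x" and ?z2 = "apply_bcontfun g x"
  have w: "norm ?w < 1" using norm_bounded[of f0 x] assms by simp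
  have z1: "norm ?z1 \<le> 1" using norm_bounded[of f x] assms by simp
  have z2: "norm ?z2 \<le> 1" using norm_bounded[of g x] assms by simp
  have g1: "1 - norm f0 \<le> norm (1 - cnj ?w * ?z1)"
    using denom_ge[OF w z1] norm_bounded[of f0 x] by linarith
  have g2: "1 - norm f0 \<le> norm (1 - cnj ?w * ?z2)"
    using denom_ge[OF w z2] norm_bounded[of f0 x] by linarith
  have d0: "0 < 1 - norm f0" using assms by simp
  have zz: "norm (?z1 - ?z2) \<le> norm (f - g)"
    using norm_bounded[of "f - g" x] by simp
  have "apply_bcontfun (Tmap f0 f - Tmap f0 g) x = mob ?w ?z1 - mob ?w ?z2"
    using Tmap_apply[OF assms(1,2)] Tmap_apply[OF assms(1,3)] by simp
  also have "\<dots> = (?z1 - ?z2) * (1 - ?w * cnj ?w) / ((1 - cnj ?w * ?z1) * (1 - cnj ?w * ?z2))"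
    by (rule mob_diff[OF denom_nz[OF w z1] denom_nz[OF w z2]])
  finally have eq: "norm (apply_bcontfun (Tmap f0 f - Tmap f0 g) x) =
      norm (?z1 - ?z2) * norm (1 - ?w * cnj ?w) / (norm (1 - cnj ?w * ?z1) * norm (1 - cnj ?w * ?z2))"
    by (simp add: norm_mult norm_divide)
  have num: "norm (?z1 - ?z2) * norm (1 - ?w * cnj ?w) \<le> norm (f - g)"
    using K_le[OF w] zz by (metis mult_left_le norm_ge_zero order_trans)
  have den: "(1 - norm f0)^2 \<le> norm (1 - cnj ?w * ?z1) * norm (1 - cnj ?w * ?z2)"
    unfolding power2_eq_square using g1 g2 d0 by (intro mult_mono) auto
  show "norm (apply_bcontfun (Tmap f0 f - Tmap f0 g) x) \<le> norm (f - g) / (1 - norm f0)^2"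
    unfolding eq using num den d0 by (intro frac_le) auto
qed

definition mulB :: "('a::topological_space \<Rightarrow> complex) \<Rightarrow> 'a CK \<Rightarrow> 'a CK" where
  "mulB p h = Bcontfun (\<lambda>x. p x * apply_bcontfun h x)"

lemma mulB_apply:
  assumes "continuous_on UNIV p" "\<And>x. norm (p x) \<le> M"
  shows "apply_bcontfun (mulB p h) x = p x * apply_bcontfun h x"
proof -
  have "(\<lambda>x. p x * apply_bcontfun h x) \<in> bcontfun"
  proof (rule bcontfun_normI)
    show "continuous_on UNIV (\<lambda>x. p x * apply_bcontfun h x)" using assms(1) by (intro continuous_intros) auto
    show "norm (p x * apply_bcontfun h x) \<le> M * norm h" for x
      unfolding norm_mult using assms(2)[of x] norm_bounded[of h x]
      by (intro mult_mono) (auto intro: order_trans[OF norm_ge_zero])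
  qed
  then show ?thesis by (simp add: mulB_def Bcontfun_inverse)
qed

lemma mulB_norm:
  assumes "continuous_on UNIV p" "\<And>x. norm (p x) \<le> M"
  shows "norm (mulB p h) \<le> M * norm h"
proof (rule norm_bound)
  fix x
  have M: "0 \<le> M" using assms(2)[of x] norm_ge_zero[of "p x"] by linarith
  show "norm (apply_bcontfun (mulB p h) x) \<le> M * norm h"
    unfolding mulB_apply[OF assms] norm_mult using assms(2)[of x] norm_bounded[of h x] M
    by (intro mult_mono) auto
qed

lemma mulB_bl:
  assumes "continuous_on UNIV p" "\<And>x. norm (p x) \<le> M"
  shows "bounded_linear (mulB p)"
proof (rule bounded_linear_intro[where K = M])
  show "mulB p (x + y) = mulB p x + mulB p y" for x y
    by (rule bcontfun_eqI) (simp add: mulB_apply[OF assms] algebra_simps)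
  show "mulB p (r *\<^sub>R x) = r *\<^sub>R mulB p x" for r x
    by (rule bcontfun_eqI) (simp add: mulB_apply[OF assms] scaleR_conv_of_real algebra_simps)
  show "norm (mulB p x) \<le> norm x * M" for x
    using mulB_norm[OF assms] by (simp add: mult.commute)
qed

lemma scaleC_apply: "apply_bcontfun (scaleC_CK c v) x = c * apply_bcontfun v x"
proof -
  have "(\<lambda>x. c * apply_bcontfun v x) \<in> bcontfun"
  proof (rule bcontfun_normI)
    show "continuous_on UNIV (\<lambda>x. c * apply_bcontfun v x)" by (intro continuous_intros) auto
    show "norm (c * apply_bcontfun v x) \<le> norm c * norm v" for x
      unfolding norm_mult using norm_bounded[of v x] by (intro mult_left_mono) auto
  qed
  then show ?thesis by (simp add: scaleC_CK_def Bcontfun_inverse)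
qed

lemma mulB_scaleC:
  assumes "continuous_on UNIV p" "\<And>x. norm (p x) \<le> M"
  shows "mulB p (scaleC_CK c v) = scaleC_CK c (mulB p v)"
  by (rule bcontfun_eqI) (simp add: mulB_apply[OF assms] scaleC_apply)

definition dfun :: "'a::topological_space CK \<Rightarrow> 'a CK \<Rightarrow> 'a \<Rightarrow> complex" where
  "dfun f0 g x = (1 - apply_bcontfun f0 x * cnj (apply_bcontfun f0 x)) /
      (1 - cnj (apply_bcontfun f0 x) * apply_bcontfun g x)^2"

lemma dfun_props:
  fixes f0 g :: "'a::topological_space CK"
  assumes "norm f0 < 1" "norm g \<le> 1"
  shows "continuous_on UNIV (dfun f0 g)" "\<And>x. norm (dfun f0 g x) \<le> 1 / (1 - norm f0)^2"
proof -
  have w: "norm (apply_bcontfun f0 y) < 1" for y using norm_bounded[of f0 y] assms by linarith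
  have z: "norm (apply_bcontfun g y) \<le> 1" for y using norm_bounded[of g y] assms by linarith
  have nz: "1 - cnj (apply_bcontfun f0 y) * apply_bcontfun g y \<noteq> 0" for y
    using denom_nz[OF w z] .
  have ge: "1 - norm f0 \<le> norm (1 - cnj (apply_bcontfun f0 y) * apply_bcontfun g y)" for y
    using denom_ge[OF w z, of y y] norm_bounded[of f0 y] by linarith
  show "continuous_on UNIV (dfun f0 g)"
    unfolding dfun_def using nz by (intro continuous_intros) auto
  fix x
  have d0: "0 < 1 - norm f0" using assms by simp
  have "(1 - norm f0)^2 \<le> (norm (1 - cnj (apply_bcontfun f0 x) * apply_bcontfun g x))^2"
    using ge[of x] d0 by (intro power_mono) auto
  then show "norm (dfun f0 g x) \<le> 1 / (1 - norm f0)^2"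
    unfolding dfun_def norm_divide norm_power using K_le[OF w[of x]] d0
    by (intro frac_le) auto
qed

lemma alg_id:
  fixes D D' k K :: complex
  assumes "D \<noteq> 0" "D' \<noteq> 0"
  shows "k * K / (D' * D) - K / D^2 * k = k * K * (D - D') / (D' * D^2)"
  using assms by (simp add: field_simps power2_eq_square)

lemma Tmap_rem:
  fixes f0 g h :: "'a::topological_space CK"
  assumes "norm f0 < 1" "norm g \<le> 1" "norm (g + h) \<le> 1"
  shows "norm (Tmap f0 (g + h) - Tmap f0 g - mulB (dfun f0 g) h) \<le> (norm h)^2 / (1 - norm f0)^3"
proof (rule norm_bound)
  fix x
  let ?w = "apply_bcontfun f0 x" and ?z = "apply_bcontfun g x" and ?k = "apply_bcontfun h x"
  define D where "D = 1 - cnj ?w * ?z"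
  define D' where "D' = 1 - cnj ?w * (?z + ?k)"
  define K where "K = 1 - ?w * cnj ?w"
  have w: "norm ?w < 1" using norm_bounded[of f0 x] assms by simp
  have z1: "norm ?z \<le> 1" using norm_bounded[of g x] assms by simp
  have z2: "norm (?z + ?k) \<le> 1" using norm_bounded[of "g + h" x] assms by simp
  have D: "D \<noteq> 0" unfolding D_def by (rule denom_nz[OF w z1])
  have D': "D' \<noteq> 0" unfolding D'_def by (rule denom_nz[OF w z2])
  have g1: "1 - norm f0 \<le> norm D"
    unfolding D_def using denom_ge[OF w z1] norm_bounded[of f0 x] by linarith
  have g2: "1 - norm f0 \<le> norm D'"
    unfolding D'_def using denom_ge[OF w z2] norm_bounded[of f0 x] by linarith
  have d0: "0 < 1 - norm f0" using assms by simp
  have kk: "norm ?k \<le> norm h" by (rule norm_bounded)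
  have e1: "apply_bcontfun (Tmap f0 (g + h) - Tmap f0 g - mulB (dfun f0 g) h) x
      = mob ?w (?z + ?k) - mob ?w ?z - K / D^2 * ?k"
  proof -
    have m: "apply_bcontfun (mulB (dfun f0 g) h) x = dfun f0 g x * ?k"
      by (rule mulB_apply[OF dfun_props[OF assms(1,2)]])
    have dd: "dfun f0 g x = K / D^2" by (simp add: dfun_def K_def D_def)
    show ?thesis
      using Tmap_apply[OF assms(1,3)] Tmap_apply[OF assms(1,2)] by (simp add: m dd)
  qed
  have e2: "mob ?w (?z + ?k) - mob ?w ?z = (?z + ?k - ?z) * K / (D' * D)"
    unfolding K_def D_def D'_def by (rule mob_diff[OF D'[unfolded D'_def] D[unfolded D_def]])
  have e3: "D - D' = cnj ?w * ?k" unfolding D_def D'_def by (simp add: algebra_simps)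
  have e4: "(?z + ?k - ?z) * K / (D' * D) - K / D^2 * ?k = ?k * K * (cnj ?w * ?k) / (D' * D^2)"
    unfolding add_diff_cancel_left' e3[symmetric] by (rule alg_id[OF D D'])
  have e5: "apply_bcontfun (Tmap f0 (g + h) - Tmap f0 g - mulB (dfun f0 g) h) x
      = ?k * K * (cnj ?w * ?k) / (D' * D^2)"
    unfolding e1 e2 e4 ..
  have eq: "norm (apply_bcontfun (Tmap f0 (g + h) - Tmap f0 g - mulB (dfun f0 g) h) x)
      = (norm ?k * norm ?k) * (norm K * norm ?w) / (norm D' * (norm D * norm D))"
    unfolding e5 norm_divide norm_mult norm_power complex_mod_cnj power2_eq_square
    by (simp only: mult_ac)
  have num: "(norm ?k * norm ?k) * (norm K * norm ?w) \<le> (norm h)^2"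
  proof -
    have "norm K * norm ?w \<le> 1" using K_le[OF w] w unfolding K_def
      by (meson mult_le_one norm_ge_zero less_imp_le)
    moreover have "norm ?k * norm ?k \<le> (norm h)^2" using kk unfolding power2_eq_square
      by (intro mult_mono) auto
    ultimately show ?thesis
      using mult_mono[of "norm ?k * norm ?k" "(norm h)^2" "norm K * norm ?w" 1] by simp
  qed
  have den: "(1 - norm f0)^3 \<le> norm D' * (norm D * norm D)"
  proof -
    have "(1 - norm f0)^3 = (1 - norm f0) * ((1 - norm f0) * (1 - norm f0))"
      by (simp add: power3_eq_cube)
    also have "\<dots> \<le> norm D' * (norm D * norm D)"
      using g1 g2 d0 by (intro mult_mono) auto
    finally show ?thesis .
  qed
  show "norm (apply_bcontfun (Tmap f0 (g + h) - Tmap f0 g - mulB (dfun f0 g) h) x) \<le> (norm h)^2 / (1 - norm f0)^3"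
    unfolding eq using num den d0 by (intro frac_le) auto
qed

lemma Tmap_deriv:
  fixes f0 g :: "'a::topological_space CK"
  assumes "norm f0 < 1" "norm g < 1"
  shows "(Tmap f0 has_derivative mulB (dfun f0 g)) (at g)"
proof -
  have g1: "norm g \<le> 1" using assms by simp
  note dp = dfun_props[OF assms(1) g1]
  have d0: "0 < 1 - norm f0" using assms by simp
  have ev: "eventually (\<lambda>y. norm (norm (Tmap f0 y - Tmap f0 g - mulB (dfun f0 g) (y - g)) / norm (y - g))
      \<le> norm (y - g) / (1 - norm f0)^3) (at g)"
    unfolding eventually_at
  proof (intro exI conjI ballI impI)
    show "0 < 1 - norm g" using assms by simp
    fix y :: "'a CK" assume y: "y \<noteq> g \<and> dist y g < 1 - norm g"
    have ny: "norm (g + (y - g)) \<le> 1"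
      using y norm_triangle_ineq[of g "y - g"] by (simp add: dist_norm)
    have r: "norm (Tmap f0 (g + (y - g)) - Tmap f0 g - mulB (dfun f0 g) (y - g)) \<le> (norm (y - g))^2 / (1 - norm f0)^3"
      by (rule Tmap_rem[OF assms(1) g1 ny])
    then have r': "norm (Tmap f0 y - Tmap f0 g - mulB (dfun f0 g) (y - g)) \<le> (norm (y - g))^2 / (1 - norm f0)^3"
      by simp
    have pos: "0 < norm (y - g)" using y by simp
    have "norm (Tmap f0 y - Tmap f0 g - mulB (dfun f0 g) (y - g)) / norm (y - g)
        \<le> ((norm (y - g))^2 / (1 - norm f0)^3) / norm (y - g)"
      by (rule divide_right_mono[OF r']) simp
    also have "\<dots> = norm (y - g) / (1 - norm f0)^3"
      using pos by (simp add: power2_eq_square)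
    finally show "norm (norm (Tmap f0 y - Tmap f0 g - mulB (dfun f0 g) (y - g)) / norm (y - g))
      \<le> norm (y - g) / (1 - norm f0)^3" by simp
  qed
  have lim: "((\<lambda>y. norm (y - g) / (1 - norm f0)^3) \<longlongrightarrow> 0) (at g)"
  proof -
    have "((\<lambda>y. y - g) \<longlongrightarrow> g - g) (at g)"
      by (intro tendsto_diff tendsto_ident_at tendsto_const)
    then have "((\<lambda>y. norm (y - g)) \<longlongrightarrow> norm (g - g)) (at g)"
      by (rule tendsto_norm)
    then have "((\<lambda>y. norm (y - g)) \<longlongrightarrow> 0) (at g)" by simp
    then show ?thesis using tendsto_divide[OF _ tendsto_const, of _ 0 "at g" "(1 - norm f0)^3"] d0 by simp
  qed
  show ?thesis
    unfolding has_derivative_iff_norm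
    using mulB_bl[OF dp] Lim_null_comparison[OF ev lim] by simp
qed

lemma compT_holo:
  fixes f0 :: "'a::topological_space CK"
  assumes "norm f0 < 1" "holo_on unitB \<psi>"
  shows "holo_on unitB (compT f0 \<psi>)"
  unfolding holo_on_def
proof
  fix g :: "'a CK" assume g: "g \<in> unitB"
  have ng: "norm g < 1" using g by (simp add: unitB_iff)
  have Tg: "Tmap f0 g \<in> unitB" using Tmap_norm[OF assms(1) ng] by (simp add: unitB_iff)
  obtain L where L: "(\<psi> has_derivative L) (at (Tmap f0 g))" "\<forall>c v. L (scaleC_CK c v) = c * L v"
    using assms(2) Tg unfolding holo_on_def by blast
  have "((\<lambda>y. \<psi> (Tmap f0 y)) has_derivative (\<lambda>v. L (mulB (dfun f0 g) v))) (at g)"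
    by (rule has_derivative_compose[OF Tmap_deriv[OF assms(1) ng] L(1)])
  then have "(compT f0 \<psi> has_derivative (\<lambda>v. L (mulB (dfun f0 g) v))) (at g)"
    by (rule has_derivative_transform_within_open[OF _ open_unitB g]) (simp add: compT_def)
  moreover have "\<forall>c v. L (mulB (dfun f0 g) (scaleC_CK c v)) = c * L (mulB (dfun f0 g) v)"
  proof -
    have nle: "norm g \<le> 1" using ng by simp
    have ms: "mulB (dfun f0 g) (scaleC_CK c v) = scaleC_CK c (mulB (dfun f0 g) v)" for c v
      by (rule mulB_scaleC[OF dfun_props[OF assms(1) nle]])
    show ?thesis using L(2) ms by simp
  qed
  ultimately show "\<exists>L. (compT f0 \<psi> has_derivative L) (at g) \<and> (\<forall>c v. L (scaleC_CK c v) = c * L v)"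
    by blast
qed

lemma ucont_subset:
  fixes f :: "'a::metric_space \<Rightarrow> 'b::metric_space"
  assumes "uniformly_continuous_on S f" "T \<subseteq> S"
  shows "uniformly_continuous_on T f"
  unfolding uniformly_continuous_on_def
proof (intro allI impI)
  fix e :: real assume "0 < e"
  then obtain d where d: "d > 0" "\<forall>x\<in>S. \<forall>x'\<in>S. dist x' x < d \<longrightarrow> dist (f x') (f x) < e"
    using assms(1) unfolding uniformly_continuous_on_def by metis
  show "\<exists>d>0. \<forall>x\<in>T. \<forall>x'\<in>T. dist x' x < d \<longrightarrow> dist (f x') (f x) < e"
    using d assms(2) by (meson subsetD)
qed

lemma ucont_cong: "uniformly_continuous_on S f \<Longrightarrow> (\<And>x. x \<in> S \<Longrightarrow> f x = g x) \<Longrightarrow> uniformly_continuous_on S g"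
  for f :: "'a::metric_space \<Rightarrow> 'b::metric_space"
  unfolding uniformly_continuous_on_def by simp

lemma Tmap_ucont:
  fixes f0 :: "'a::topological_space CK"
  assumes "norm f0 < 1"
  shows "uniformly_continuous_on unitB (Tmap f0)"
  unfolding uniformly_continuous_on_def
proof (intro allI impI)
  fix e :: real assume e: "0 < e"
  define \<delta> where "\<delta> = (1 - norm f0)^2"
  have d: "0 < \<delta>" using assms by (simp add: \<delta>_def)
  show "\<exists>d>0. \<forall>x\<in>unitB. \<forall>x'\<in>unitB. dist x' x < d \<longrightarrow> dist (Tmap f0 x') (Tmap f0 x) < e"
  proof (intro exI conjI ballI impI)
    show "0 < e * \<delta>" using e d by simp
    fix x x' :: "'a CK" assume x: "x \<in> unitB" and x': "x' \<in> unitB" and dd: "dist x' x < e * \<delta>"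
    have "dist (Tmap f0 x') (Tmap f0 x) \<le> norm (x' - x) / \<delta>"
      unfolding dist_norm \<delta>_def
      by (rule Tmap_lip[OF assms]) (use x x' in \<open>auto simp: unitB_iff\<close>)
    also have "\<dots> < e" using dd d by (simp add: dist_norm divide_less_eq)
    finally show "dist (Tmap f0 x') (Tmap f0 x) < e" .
  qed
qed

lemma compT_Hinf:
  fixes f0 :: "'a::topological_space CK"
  assumes "norm f0 < 1" "\<psi> \<in> Hinf unitB"
  shows "compT f0 \<psi> \<in> Hinf unitB"
proof -
  obtain M where M: "\<forall>g\<in>unitB. norm (\<psi> g) \<le> M" using assms(2) unfolding Hinf_def by blast
  have "\<forall>g\<in>unitB. norm (compT f0 \<psi> g) \<le> M"
    using M Tmap_norm[OF assms(1)] by (auto simp: compT_def unitB_iff)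
  moreover have "holo_on unitB (compT f0 \<psi>)"
    using compT_holo[OF assms(1)] assms(2) unfolding Hinf_def by blast
  ultimately show ?thesis unfolding Hinf_def by (auto simp: compT_def)
qed

lemma compT_Au:
  fixes f0 :: "'a::topological_space CK"
  assumes "norm f0 < 1" "\<psi> \<in> Au unitB"
  shows "compT f0 \<psi> \<in> Au unitB"
proof -
  have "uniformly_continuous_on unitB (\<lambda>g. \<psi> (Tmap f0 g))"
  proof (rule uniformly_continuous_on_compose[OF Tmap_ucont[OF assms(1)]])
    show "uniformly_continuous_on (Tmap f0 ` unitB) \<psi>"
    proof (rule ucont_subset)
      show "uniformly_continuous_on unitB \<psi>" using assms(2) unfolding Au_def by blast
      show "Tmap f0 ` unitB \<subseteq> unitB" using Tmap_norm[OF assms(1)] by (auto simp: unitB_iff)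
    qed
  qed
  then have "uniformly_continuous_on unitB (compT f0 \<psi>)"
    by (rule ucont_cong) (simp add: compT_def)
  then show ?thesis using compT_Hinf[OF assms(1)] assms(2) unfolding Au_def by blast
qed

lemma holo_add:
  assumes "holo_on S \<psi>" "holo_on S \<phi>"
  shows "holo_on S (\<lambda>x. \<psi> x + \<phi> x)"
  unfolding holo_on_def
proof
  fix g assume g: "g \<in> S"
  obtain L1 where L1: "(\<psi> has_derivative L1) (at g)" "\<forall>c v. L1 (scaleC_CK c v) = c * L1 v"
    using assms(1) g unfolding holo_on_def by blast
  obtain L2 where L2: "(\<phi> has_derivative L2) (at g)" "\<forall>c v. L2 (scaleC_CK c v) = c * L2 v"
    using assms(2) g unfolding holo_on_def by blast
  show "\<exists>L. ((\<lambda>x. \<psi> x + \<phi> x) has_derivative L) (at g) \<and> (\<forall>c v. L (scaleC_CK c v) = c * L v)"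
  proof (intro exI conjI)
    show "((\<lambda>x. \<psi> x + \<phi> x) has_derivative (\<lambda>v. L1 v + L2 v)) (at g)"
      by (rule has_derivative_add[OF L1(1) L2(1)])
    show "\<forall>c v. L1 (scaleC_CK c v) + L2 (scaleC_CK c v) = c * (L1 v + L2 v)"
      using L1(2) L2(2) by (simp add: algebra_simps)
  qed
qed

lemma holo_mult:
  assumes "holo_on S \<psi>" "holo_on S \<phi>"
  shows "holo_on S (\<lambda>x. \<psi> x * \<phi> x)"
  unfolding holo_on_def
proof
  fix g assume g: "g \<in> S"
  obtain L1 where L1: "(\<psi> has_derivative L1) (at g)" "\<forall>c v. L1 (scaleC_CK c v) = c * L1 v"
    using assms(1) g unfolding holo_on_def by blast
  obtain L2 where L2: "(\<phi> has_derivative L2) (at g)" "\<forall>c v. L2 (scaleC_CK c v) = c * L2 v"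
    using assms(2) g unfolding holo_on_def by blast
  show "\<exists>L. ((\<lambda>x. \<psi> x * \<phi> x) has_derivative L) (at g) \<and> (\<forall>c v. L (scaleC_CK c v) = c * L v)"
  proof (intro exI conjI)
    show "((\<lambda>x. \<psi> x * \<phi> x) has_derivative (\<lambda>v. \<psi> g * L2 v + L1 v * \<phi> g)) (at g)"
      by (rule has_derivative_mult[OF L1(1) L2(1)])
    show "\<forall>c v. \<psi> g * L2 (scaleC_CK c v) + L1 (scaleC_CK c v) * \<phi> g = c * (\<psi> g * L2 v + L1 v * \<phi> g)"
      using L1(2) L2(2) by (simp add: algebra_simps)
  qed
qed

lemma holo_const: "holo_on S (\<lambda>x. c)"
  unfolding holo_on_def
proof
  fix g
  show "\<exists>L. ((\<lambda>x. c) has_derivative L) (at g) \<and> (\<forall>c v. L (scaleC_CK c v) = c * L v)"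
  proof (intro exI conjI)
    show "((\<lambda>x. c) has_derivative (\<lambda>v. 0)) (at g)" by (rule has_derivative_const)
    show "\<forall>c v. (\<lambda>v. 0::complex) (scaleC_CK c v) = c * (\<lambda>v. 0) v" by simp
  qed
qed

definition e0 :: "'a::topological_space CK \<Rightarrow> complex" where
  "e0 = (\<lambda>g. if g \<in> unitB then 1 else 0)"

lemma holo_e0: "holo_on unitB e0"
  unfolding holo_on_def
proof
  fix g :: "'a CK" assume g: "g \<in> unitB"
  show "\<exists>L. (e0 has_derivative L) (at g) \<and> (\<forall>c v. L (scaleC_CK c v) = c * L v)"
  proof (intro exI conjI)
    show "(e0 has_derivative (\<lambda>v. 0)) (at g)"
      by (rule has_derivative_transform_within_open[OF has_derivative_const open_unitB g])
         (simp add: e0_def)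
    show "\<forall>c v. (\<lambda>v. 0::complex) (scaleC_CK c v) = c * (\<lambda>v. 0) v" by simp
  qed
qed

lemma ucont_mult:
  fixes f g :: "'a::metric_space \<Rightarrow> complex"
  assumes "uniformly_continuous_on S f" "uniformly_continuous_on S g"
    "\<forall>x\<in>S. norm (f x) \<le> M1" "\<forall>x\<in>S. norm (g x) \<le> M2"
  shows "uniformly_continuous_on S (\<lambda>x. f x * g x)"
  unfolding uniformly_continuous_on_def
proof (intro allI impI)
  fix e :: real assume e: "0 < e"
  define A where "A = \<bar>M1\<bar> + \<bar>M2\<bar> + 1"
  have A: "0 < A" unfolding A_def by simp
  have e2: "0 < e / (2 * A)" using e A by simp
  obtain d1 where d1: "d1 > 0" "\<forall>x\<in>S. \<forall>x'\<in>S. dist x' x < d1 \<longrightarrow> dist (f x') (f x) < e / (2 * A)"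
    using assms(1) e2 unfolding uniformly_continuous_on_def by metis
  obtain d2 where d2: "d2 > 0" "\<forall>x\<in>S. \<forall>x'\<in>S. dist x' x < d2 \<longrightarrow> dist (g x') (g x) < e / (2 * A)"
    using assms(2) e2 unfolding uniformly_continuous_on_def by metis
  show "\<exists>d>0. \<forall>x\<in>S. \<forall>x'\<in>S. dist x' x < d \<longrightarrow> dist (f x' * g x') (f x * g x) < e"
  proof (intro exI[of _ "min d1 d2"] conjI ballI impI)
    show "0 < min d1 d2" using d1 d2 by simp
    fix x x' assume x: "x \<in> S" and x': "x' \<in> S" and dd: "dist x' x < min d1 d2"
    have f1: "norm (f x' - f x) < e / (2 * A)" using d1(2) x x' dd by (simp add: dist_norm)
    have g1: "norm (g x' - g x) < e / (2 * A)" using d2(2) x x' dd by (simp add: dist_norm)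
    have fA: "norm (f x') \<le> A" using assms(3) x' unfolding A_def by force
    have gA: "norm (g x) \<le> A" using assms(4) x unfolding A_def by force
    have "f x' * g x' - f x * g x = f x' * (g x' - g x) + (f x' - f x) * g x"
      by (simp add: algebra_simps)
    then have "norm (f x' * g x' - f x * g x) \<le> norm (f x') * norm (g x' - g x) + norm (f x' - f x) * norm (g x)"
      by (metis norm_mult norm_triangle_ineq)
    also have "\<dots> \<le> A * norm (g x' - g x) + norm (f x' - f x) * A"
      using fA gA by (intro add_mono mult_right_mono mult_left_mono) auto
    also have "\<dots> < A * (e / (2 * A)) + (e / (2 * A)) * A"
      using f1 g1 A by (intro add_strict_mono mult_strict_left_mono mult_strict_right_mono) auto
    also have "\<dots> = e" using A by (simp add: field_simps)
    finally show "dist (f x' * g x') (f x * g x) < e" by (simp add: dist_norm)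
  qed
qed

definition Hgood :: "('a::topological_space CK \<Rightarrow> complex) set \<Rightarrow> bool" where
  "Hgood H \<longleftrightarrow>
     (\<forall>\<psi>\<in>H. \<forall>\<phi>\<in>H. (\<lambda>x. \<psi> x + \<phi> x) \<in> H) \<and>
     (\<forall>\<psi>\<in>H. \<forall>c. (\<lambda>x. c * \<psi> x) \<in> H) \<and>
     (\<forall>\<psi>\<in>H. \<forall>\<phi>\<in>H. (\<lambda>x. \<psi> x * \<phi> x) \<in> H) \<and>
     e0 \<in> H \<and>
     (\<forall>\<psi>\<in>H. \<forall>g. g \<notin> unitB \<longrightarrow> \<psi> g = 0) \<and>
     (\<forall>f0. norm f0 < 1 \<longrightarrow> (\<forall>\<psi>\<in>H. compT f0 \<psi> \<in> H)) \<and>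
     Au unitB \<subseteq> H"

lemma Hgood_add: "Hgood H \<Longrightarrow> \<psi> \<in> H \<Longrightarrow> \<phi> \<in> H \<Longrightarrow> (\<lambda>x. \<psi> x + \<phi> x) \<in> H"
  unfolding Hgood_def by simp
lemma Hgood_cmul: "Hgood H \<Longrightarrow> \<psi> \<in> H \<Longrightarrow> (\<lambda>x. c * \<psi> x) \<in> H"
  unfolding Hgood_def by simp
lemma Hgood_mult: "Hgood H \<Longrightarrow> \<psi> \<in> H \<Longrightarrow> \<phi> \<in> H \<Longrightarrow> (\<lambda>x. \<psi> x * \<phi> x) \<in> H"
  unfolding Hgood_def by simp
lemma Hgood_e0: "Hgood H \<Longrightarrow> e0 \<in> H"
  unfolding Hgood_def by simp
lemma Hgood_van: "Hgood H \<Longrightarrow> \<psi> \<in> H \<Longrightarrow> g \<notin> unitB \<Longrightarrow> \<psi> g = 0"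
  unfolding Hgood_def by simp
lemma Hgood_compT: "Hgood H \<Longrightarrow> norm f0 < 1 \<Longrightarrow> \<psi> \<in> H \<Longrightarrow> compT f0 \<psi> \<in> H"
  unfolding Hgood_def by simp
lemma Hgood_Au: "Hgood H \<Longrightarrow> Au unitB \<subseteq> H"
  unfolding Hgood_def by simp

lemma HinfI: "holo_on unitB \<psi> \<Longrightarrow> \<forall>g\<in>unitB. norm (\<psi> g) \<le> M \<Longrightarrow> (\<And>g. g \<notin> unitB \<Longrightarrow> \<psi> g = 0) \<Longrightarrow> \<psi> \<in> Hinf unitB"
  unfolding Hinf_def by blast

lemma Hinf_good: "Hgood (Hinf unitB :: ('a::topological_space CK \<Rightarrow> complex) set)"
  unfolding Hgood_def
proof (intro conjI ballI allI impI)
  fix \<psi> \<phi> :: "'a CK \<Rightarrow> complex" assume p: "\<psi> \<in> Hinf unitB" and q: "\<phi> \<in> Hinf unitB"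
  obtain M1 where M1: "\<forall>g\<in>unitB. norm (\<psi> g) \<le> M1" using p unfolding Hinf_def by blast
  obtain M2 where M2: "\<forall>g\<in>unitB. norm (\<phi> g) \<le> M2" using q unfolding Hinf_def by blast
  have hp: "holo_on unitB \<psi>" and hq: "holo_on unitB \<phi>" using p q unfolding Hinf_def by auto
  have "\<forall>g\<in>unitB. norm (\<psi> g + \<phi> g) \<le> M1 + M2"
    using M1 M2 by (meson add_mono norm_triangle_ineq order_trans)
  then show "(\<lambda>x. \<psi> x + \<phi> x) \<in> Hinf unitB"
    by (intro HinfI[OF holo_add[OF hp hq]]) (use p q in \<open>auto simp: Hinf_def\<close>)
  have "\<forall>g\<in>unitB. norm (\<psi> g * \<phi> g) \<le> M1 * M2"
    using M1 M2 unfolding norm_mult by (meson mult_mono norm_ge_zero order_trans)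
  then show "(\<lambda>x. \<psi> x * \<phi> x) \<in> Hinf unitB"
    by (intro HinfI[OF holo_mult[OF hp hq]]) (use p q in \<open>auto simp: Hinf_def\<close>)
next
  fix \<psi> :: "'a CK \<Rightarrow> complex" and c assume p: "\<psi> \<in> Hinf unitB"
  obtain M1 where M1: "\<forall>g\<in>unitB. norm (\<psi> g) \<le> M1" using p unfolding Hinf_def by blast
  have hp: "holo_on unitB \<psi>" using p unfolding Hinf_def by auto
  have "\<forall>g\<in>unitB. norm (c * \<psi> g) \<le> norm c * M1"
    using M1 unfolding norm_mult by (simp add: mult_left_mono)
  then show "(\<lambda>x. c * \<psi> x) \<in> Hinf unitB"
    by (intro HinfI[OF holo_mult[OF holo_const hp]]) (use p in \<open>auto simp: Hinf_def\<close>)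
next
  show "e0 \<in> Hinf unitB"
    unfolding Hinf_def using holo_e0 by (auto simp: e0_def)
next
  fix \<psi> :: "'a CK \<Rightarrow> complex" and g :: "'a CK" assume "\<psi> \<in> Hinf unitB" "g \<notin> unitB"
  then show "\<psi> g = 0" unfolding Hinf_def by blast
next
  fix f0 :: "'a CK" and \<psi> :: "'a CK \<Rightarrow> complex" assume "norm f0 < 1" "\<psi> \<in> Hinf unitB"
  then show "compT f0 \<psi> \<in> Hinf unitB" by (rule compT_Hinf)
next
  show "Au unitB \<subseteq> Hinf unitB" unfolding Au_def by blast
qed

lemma Au_good: "Hgood (Au unitB :: ('a::topological_space CK \<Rightarrow> complex) set)"
proof -
  have G: "Hgood (Hinf unitB :: ('a CK \<Rightarrow> complex) set)" by (rule Hinf_good)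
  show ?thesis
    unfolding Hgood_def
  proof (intro conjI ballI allI impI)
    fix \<psi> \<phi> :: "'a CK \<Rightarrow> complex" assume p: "\<psi> \<in> Au unitB" and q: "\<phi> \<in> Au unitB"
    have pi: "\<psi> \<in> Hinf unitB" and qi: "\<phi> \<in> Hinf unitB" using p q unfolding Au_def by auto
    have pu: "uniformly_continuous_on unitB \<psi>" and qu: "uniformly_continuous_on unitB \<phi>"
      using p q unfolding Au_def by auto
    obtain M1 where M1: "\<forall>g\<in>unitB. norm (\<psi> g) \<le> M1" using pi unfolding Hinf_def by blast
    obtain M2 where M2: "\<forall>g\<in>unitB. norm (\<phi> g) \<le> M2" using qi unfolding Hinf_def by blast
    have "(\<lambda>x. \<psi> x + \<phi> x) \<in> Hinf unitB" using Hgood_add[OF G pi qi] .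
    moreover have "uniformly_continuous_on unitB (\<lambda>x. \<psi> x + \<phi> x)"
      by (rule uniformly_continuous_on_add[OF pu qu])
    ultimately show "(\<lambda>x. \<psi> x + \<phi> x) \<in> Au unitB" unfolding Au_def by blast
    have "(\<lambda>x. \<psi> x * \<phi> x) \<in> Hinf unitB" using Hgood_mult[OF G pi qi] .
    moreover have "uniformly_continuous_on unitB (\<lambda>x. \<psi> x * \<phi> x)"
      by (rule ucont_mult[OF pu qu M1 M2])
    ultimately show "(\<lambda>x. \<psi> x * \<phi> x) \<in> Au unitB" unfolding Au_def by blast
  next
    fix \<psi> :: "'a CK \<Rightarrow> complex" and c assume p: "\<psi> \<in> Au unitB"
    have pi: "\<psi> \<in> Hinf unitB" using p unfolding Au_def by auto
    have pu: "uniformly_continuous_on unitB \<psi>" using p unfolding Au_def by auto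
    obtain M1 where M1: "\<forall>g\<in>unitB. norm (\<psi> g) \<le> M1" using pi unfolding Hinf_def by blast
    have "(\<lambda>x. c * \<psi> x) \<in> Hinf unitB" using Hgood_cmul[OF G pi] .
    moreover have "uniformly_continuous_on unitB (\<lambda>x. c * \<psi> x)"
      by (rule ucont_mult[OF uniformly_continuous_on_const pu _ M1, of _ "norm c"]) simp
    ultimately show "(\<lambda>x. c * \<psi> x) \<in> Au unitB" unfolding Au_def by blast
  next
    have "uniformly_continuous_on unitB (e0 :: 'a CK \<Rightarrow> complex)"
      by (rule ucont_cong[OF uniformly_continuous_on_const[of _ 1]]) (simp add: e0_def)
    then show "(e0 :: 'a CK \<Rightarrow> complex) \<in> Au unitB" using Hgood_e0[OF G] unfolding Au_def by simp
  next
    fix \<psi> :: "'a CK \<Rightarrow> complex" and g :: "'a CK" assume "\<psi> \<in> Au unitB" "g \<notin> unitB"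
    then show "\<psi> g = 0" unfolding Au_def Hinf_def by blast
  next
    fix f0 :: "'a CK" and \<psi> :: "'a CK \<Rightarrow> complex" assume "norm f0 < 1" "\<psi> \<in> Au unitB"
    then show "compT f0 \<psi> \<in> Au unitB" by (rule compT_Au)
  qed simp
qed

lemma compT_add: "compT f0 (\<lambda>x. \<psi> x + \<phi> x) = (\<lambda>x. compT f0 \<psi> x + compT f0 \<phi> x)"
  by (rule ext) (simp add: compT_def)
lemma compT_cmul: "compT f0 (\<lambda>x. c * \<psi> x) = (\<lambda>x. c * compT f0 \<psi> x)"
  by (rule ext) (simp add: compT_def)
lemma compT_mult: "compT f0 (\<lambda>x. \<psi> x * \<phi> x) = (\<lambda>x. compT f0 \<psi> x * compT f0 \<phi> x)"
  by (rule ext) (simp add: compT_def)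
lemma compT_e0: "norm f0 < 1 \<Longrightarrow> compT f0 e0 = e0"
  by (rule ext) (simp add: compT_def e0_def unitB_iff Tmap_norm)

lemma spec_add: "\<tau> \<in> spectrum_alg H \<Longrightarrow> \<psi> \<in> H \<Longrightarrow> \<phi> \<in> H \<Longrightarrow> \<tau> (\<lambda>x. \<psi> x + \<phi> x) = \<tau> \<psi> + \<tau> \<phi>"
  unfolding spectrum_alg_def by simp
lemma spec_cmul: "\<tau> \<in> spectrum_alg H \<Longrightarrow> \<psi> \<in> H \<Longrightarrow> \<tau> (\<lambda>x. c * \<psi> x) = c * \<tau> \<psi>"
  unfolding spectrum_alg_def by simp
lemma spec_mult: "\<tau> \<in> spectrum_alg H \<Longrightarrow> \<psi> \<in> H \<Longrightarrow> \<phi> \<in> H \<Longrightarrow> \<tau> (\<lambda>x. \<psi> x * \<phi> x) = \<tau> \<psi> * \<tau> \<phi>"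
  unfolding spectrum_alg_def by simp
lemma spec_out: "\<tau> \<in> spectrum_alg H \<Longrightarrow> \<psi> \<notin> H \<Longrightarrow> \<tau> \<psi> = 0"
  unfolding spectrum_alg_def by simp

lemma tau_e0:
  assumes G: "Hgood H" and t: "\<tau> \<in> spectrum_alg H"
  shows "\<tau> e0 = 1"
proof -
  obtain \<psi> where \<psi>: "\<psi> \<in> H" "\<tau> \<psi> \<noteq> 0" using t unfolding spectrum_alg_def by blast
  have eq: "(\<lambda>x. e0 x * \<psi> x) = \<psi>"
  proof
    fix x show "e0 x * \<psi> x = \<psi> x"
      using Hgood_van[OF G \<psi>(1), of x] by (cases "x \<in> unitB") (auto simp: e0_def)
  qed
  have "\<tau> e0 * \<tau> \<psi> = \<tau> \<psi>"
    using spec_mult[OF t Hgood_e0[OF G] \<psi>(1)] eq by simp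
  then show ?thesis using \<psi>(2) by simp
qed

lemma hatT_spec:
  assumes G: "Hgood H" and f0: "norm f0 < 1" and t: "\<tau> \<in> spectrum_alg H"
  shows "hatT H f0 \<tau> \<in> spectrum_alg H"
  unfolding spectrum_alg_def mem_Collect_eq
proof (intro conjI ballI allI impI)
  fix \<psi> \<phi> assume p: "\<psi> \<in> H" and q: "\<phi> \<in> H"
  have cp: "compT f0 \<psi> \<in> H" by (rule Hgood_compT[OF G f0 p])
  have cq: "compT f0 \<phi> \<in> H" by (rule Hgood_compT[OF G f0 q])
  show "hatT H f0 \<tau> (\<lambda>x. \<psi> x + \<phi> x) = hatT H f0 \<tau> \<psi> + hatT H f0 \<tau> \<phi>"
    using Hgood_add[OF G p q] p q spec_add[OF t cp cq] by (simp add: hatT_def compT_add)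
  show "hatT H f0 \<tau> (\<lambda>x. \<psi> x * \<phi> x) = hatT H f0 \<tau> \<psi> * hatT H f0 \<tau> \<phi>"
    using Hgood_mult[OF G p q] p q spec_mult[OF t cp cq] by (simp add: hatT_def compT_mult)
next
  fix \<psi> c assume p: "\<psi> \<in> H"
  have cp: "compT f0 \<psi> \<in> H" by (rule Hgood_compT[OF G f0 p])
  show "hatT H f0 \<tau> (\<lambda>x. c * \<psi> x) = c * hatT H f0 \<tau> \<psi>"
    using Hgood_cmul[OF G p] p spec_cmul[OF t cp] by (simp add: hatT_def compT_cmul)
next
  show "\<exists>\<psi>\<in>H. hatT H f0 \<tau> \<psi> \<noteq> 0"
  proof
    show "e0 \<in> H" by (rule Hgood_e0[OF G])
    show "hatT H f0 \<tau> e0 \<noteq> 0"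
      using Hgood_e0[OF G] tau_e0[OF G t] compT_e0[OF f0] by (simp add: hatT_def)
  qed
next
  fix \<psi> assume "\<psi> \<notin> H"
  then show "hatT H f0 \<tau> \<psi> = 0" by (simp add: hatT_def)
qed

theorem lemma3p3:
  fixes f0 :: "'a::t2_space CK"
    and H :: "('a CK \<Rightarrow> complex) set"
  assumes "compact (UNIV :: 'a set)"
    and "f0 \<in> unitB"
    and "H = Au unitB \<or> H = Hinf unitB"
  shows "(\<forall>\<psi>\<in>H. compT f0 \<psi> \<in> H)
     \<and> (\<forall>\<tau>\<in>spectrum_alg H. hatT H f0 \<tau> \<in> spectrum_alg H)
     \<and> hatT H f0 ` fiber H f0 = fiber H 0"
proof -
  have G: "Hgood H" using assms(3) Au_good Hinf_good by auto
  have f0: "norm f0 < 1" using assms(2) by (simp add: unitB_iff)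
  have P1: "\<forall>\<psi>\<in>H. compT f0 \<psi> \<in> H" using Hgood_compT[OF G f0] by blast
  have P2: "\<forall>\<tau>\<in>spectrum_alg H. hatT H f0 \<tau> \<in> spectrum_alg H" using hatT_spec[OF G f0] by blast
  have P3: "hatT H f0 ` fiber H f0 = fiber H 0"
  proof
    show "hatT H f0 ` fiber H f0 \<subseteq> fiber H 0"
    proof
      fix \<sigma> assume "\<sigma> \<in> hatT H f0 ` fiber H f0"
      then obtain \<tau> where \<tau>: "\<tau> \<in> fiber H f0" and \<sigma>: "\<sigma> = hatT H f0 \<tau>" by blast
      have ts: "\<tau> \<in> spectrum_alg H" and tg: "\<forall>g\<in>Au unitB. \<tau> g = g f0"
        using \<tau> unfolding fiber_def by auto
      have "\<sigma> \<in> spectrum_alg H" using hatT_spec[OF G f0 ts] \<sigma> by simp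
      moreover have "\<forall>g\<in>Au unitB. \<sigma> g = g 0"
      proof
        fix g :: "'a CK \<Rightarrow> complex" assume g: "g \<in> Au unitB"
        have gH: "g \<in> H" using Hgood_Au[OF G] g by blast
        have cA: "compT f0 g \<in> Au unitB" by (rule compT_Au[OF f0 g])
        have "\<sigma> g = \<tau> (compT f0 g)" using \<sigma> gH by (simp add: hatT_def)
        also have "\<dots> = compT f0 g f0" using tg cA by blast
        also have "\<dots> = g 0" using assms(2) Tmap_self[OF f0] by (simp add: compT_def)
        finally show "\<sigma> g = g 0" .
      qed
      ultimately show "\<sigma> \<in> fiber H 0" unfolding fiber_def by blast
    qed
    show "fiber H 0 \<subseteq> hatT H f0 ` fiber H f0"
    proof
      fix \<sigma> assume s: "\<sigma> \<in> fiber H 0"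
      have ss: "\<sigma> \<in> spectrum_alg H" and sg: "\<forall>g\<in>Au unitB. \<sigma> g = g 0"
        using s unfolding fiber_def by auto
      have mf0: "norm (-f0) < 1" using f0 by simp
      define \<tau> where "\<tau> = hatT H (-f0) \<sigma>"
      have ts: "\<tau> \<in> spectrum_alg H" using hatT_spec[OF G mf0 ss] \<tau>_def by simp
      have "\<forall>g\<in>Au unitB. \<tau> g = g f0"
      proof
        fix g :: "'a CK \<Rightarrow> complex" assume g: "g \<in> Au unitB"
        have gH: "g \<in> H" using Hgood_Au[OF G] g by blast
        have cA: "compT (-f0) g \<in> Au unitB" by (rule compT_Au[OF mf0 g])
        have z: "(0 :: 'a CK) \<in> unitB" by (simp add: unitB_iff)
        have "\<tau> g = \<sigma> (compT (-f0) g)" using gH by (simp add: hatT_def \<tau>_def)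
        also have "\<dots> = compT (-f0) g 0" using sg cA by blast
        also have "\<dots> = g f0" using z Tmap_zero[OF f0] by (simp add: compT_def)
        finally show "\<tau> g = g f0" .
      qed
      then have tf: "\<tau> \<in> fiber H f0" using ts unfolding fiber_def by blast
      have "hatT H f0 \<tau> = \<sigma>"
      proof
        fix \<psi>
        show "hatT H f0 \<tau> \<psi> = \<sigma> \<psi>"
        proof (cases "\<psi> \<in> H")
          case True
          have c1: "compT f0 \<psi> \<in> H" by (rule Hgood_compT[OF G f0 True])
          have inv: "compT (-f0) (compT f0 \<psi>) = \<psi>"
          proof
            fix g :: "'a CK"
            show "compT (-f0) (compT f0 \<psi>) g = \<psi> g"
            proof (cases "g \<in> unitB")
              case gB: True
              then have ng: "norm g < 1" by (simp add: unitB_iff)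
              have "Tmap (-f0) g \<in> unitB" using Tmap_norm[OF mf0 ng] by (simp add: unitB_iff)
              moreover have "Tmap f0 (Tmap (-f0) g) = g" by (rule Tmap_inv[OF f0 ng])
              ultimately show ?thesis using gB by (simp add: compT_def)
            next
              case False
              then show ?thesis using Hgood_van[OF G \<open>\<psi> \<in> H\<close>] by (simp add: compT_def)
            qed
          qed
          show ?thesis using True c1 inv by (simp add: hatT_def \<tau>_def)
        next
          case False
          then show ?thesis using spec_out[OF ss False] by (simp add: hatT_def)
        qed
      qed
      then show "\<sigma> \<in> hatT H f0 ` fiber H f0" using tf by blast
    qed
  qed
  show ?thesis using P1 P2 P3 by blast
qed

end
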